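(* Let $r\geq 0$ be an integer and, for each integer $n\geq 0$, let $D_r(n)$ denote the number of $r$-derangements of $n+r$ elements (equivalently, $D_r(n)$ is defined by the exponential generating function $\sum_{n\geq 0} D_r(n)\frac{x^n}{n!}=\frac{x^r e^{-x}}{(1-x)^{r+1}}$; in particular $D_r(n)=0$ for $n<r$ and $D_r(n)=\sum_{j=r}^{n}(-1)^{n-j}\binom{j}{r}\frac{n!}{(n-j)!}$ for $n\geq r$). Then for every integer $n\geq r$, \[ \sum_{k=0}^{n}\binom{n}{k}\,D_r(k)=n!\binom{n}{r}. \]
   Context: An $r$-derangement of $n+r$ elements is a permutation of $\{1,\dots,n+r\}$ with no fixed points (every cycle in its cycle decomposition has length at least $2$) in which the first $r$ elements $1,\dots,r$ all lie in distinct cycles. $D_r(n)$ denotes the number of such permutations, and its exponential generating function is $\sum_{n\geq 0} D_r(n)\frac{x^n}{n!}=\frac{x^r e^{-x}}{(1-x)^{r+1}}$. For $r=0$, $D_0(n)$ is the usual number of derangements of $n$ elements. *)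

theory Defs
  imports "HOL-Combinatorics.Permutations"
begin

text \<open>r-derangements of the n+r elements 1..n+r: permutations with no fixed points
  in which 1..r lie in pairwise distinct cycles (no element of 1..r lies in the
  orbit of another).\<close>
definition r_derangements :: "nat \<Rightarrow> nat \<Rightarrow> (nat \<Rightarrow> nat) set" where
  "r_derangements r n =
     {p. p permutes {1..n+r}
         \<and> (\<forall>x\<in>{1..n+r}. p x \<noteq> x)
         \<and> (\<forall>i\<in>{1..r}. \<forall>j\<in>{1..r}. i \<noteq> j \<longrightarrow> (\<forall>k::nat. (p ^^ k) i \<noteq> j))}"

definition D :: "nat \<Rightarrow> nat \<Rightarrow> nat" where
  "D r n = card (r_derangements r n)"

end

theory Submission
  imports Defs
begin

definition Dset :: "nat set \<Rightarrow> nat set \<Rightarrow> (nat \<Rightarrow> nat) set" where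
  "Dset S N = {p. p permutes (S \<union> N) \<and> (\<forall>x\<in>S \<union> N. p x \<noteq> x)
      \<and> (\<forall>i\<in>S. \<forall>j\<in>S. i \<noteq> j \<longrightarrow> (\<forall>k::nat. (p ^^ k) i \<noteq> j))}"

lemma q_pow_ne_m:
  assumes "q m = m" "inj q" "x \<noteq> m"
  shows "(q ^^ k) x \<noteq> m"
proof (induction k)
  case 0 then show ?case using assms by simp
next
  case (Suc k)
  then show ?case using assms by (metis comp_apply funpow.simps(2) injD)
qed

lemma pow_to_fixed:
  assumes "q a = a" "inj q" "(q ^^ k) i = a"
  shows "i = a"
  using assms(3)
proof (induction k arbitrary: i)
  case 0 then show ?case by simp
next
  case (Suc k)
  then have "q i = a" by (simp add: funpow_Suc_right del: funpow.simps)
  then show ?case using assms by (metis injD)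
qed

lemma pow_fixed:
  assumes "q a = a" shows "(q ^^ k) a = a"
  using assms by (induction k) auto

lemma reach_dir2:
  assumes "q m = m" "a \<noteq> m" "inj q" "x \<noteq> m"
    and hp: "\<And>y. p y = Transposition.transpose a m (q y)"
  shows "\<exists>k'. (p ^^ k') x = (q ^^ k) x"
proof (induction k)
  case 0 show ?case by (rule exI[of _ 0]) simp
next
  case (Suc k)
  from Suc obtain k' where k': "(p ^^ k') x = (q ^^ k) x" by blast
  define z where "z = (q ^^ k) x"
  have zm: "z \<noteq> m" unfolding z_def by (rule q_pow_ne_m[OF assms(1) assms(3) assms(4)])
  have qzm: "q z \<noteq> m"
  proof
    assume "q z = m" then have "q z = q m" using assms(1) by simp
    then show False using zm assms(3) by (simp add: inj_eq)
  qed
  have qS: "(q ^^ Suc k) x = q z" unfolding z_def by simp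
  show ?case
  proof (cases "q z = a")
    case True
    have pz: "p z = m" using True hp by simp
    have pm: "p m = a" using hp assms(1) by simp
    have "(p ^^ Suc (Suc k')) x = p (p z)" using k' unfolding z_def by simp
    also have "\<dots> = a" using pz pm by simp
    finally have "(p ^^ Suc (Suc k')) x = (q ^^ Suc k) x" using True qS by simp
    then show ?thesis by blast
  next
    case False
    have pz: "p z = q z" using False qzm hp by simp
    have "(p ^^ Suc k') x = p z" using k' unfolding z_def by simp
    then have "(p ^^ Suc k') x = (q ^^ Suc k) x" using pz qS by simp
    then show ?thesis by blast
  qed
qed

lemma reach_dir1:
  assumes "q m = m" "a \<noteq> m" "inj q" "x \<noteq> m"
    and hp: "\<And>y. p y = Transposition.transpose a m (q y)"
  shows "((p ^^ k) x \<noteq> m \<longrightarrow> (\<exists>k'. (q ^^ k') x = (p ^^ k) x))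
       \<and> ((p ^^ k) x = m \<longrightarrow> (\<exists>k'. (q ^^ k') x = a))"
proof (induction k)
  case 0
  show ?case
  proof (intro conjI impI)
    show "\<exists>k'. (q ^^ k') x = (p ^^ 0) x" by (rule exI[of _ 0]) simp
  next
    assume "(p ^^ 0) x = m" then show "\<exists>k'. (q ^^ k') x = a" using assms(4) by simp
  qed
next
  case (Suc k)
  define z where "z = (p ^^ k) x"
  have IH: "(z \<noteq> m \<longrightarrow> (\<exists>k'. (q ^^ k') x = z)) \<and> (z = m \<longrightarrow> (\<exists>k'. (q ^^ k') x = a))"
    using Suc unfolding z_def by blast
  have pS: "(p ^^ Suc k) x = p z" unfolding z_def by simp
  show ?case
  proof (cases "z = m")
    case True
    then obtain k' where k': "(q ^^ k') x = a" using IH by blast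
    have "p z = a" using True assms(1) hp by simp
    then show ?thesis using pS k' assms(2) by auto
  next
    case False
    then obtain k' where k': "(q ^^ k') x = z" using IH by blast
    have qzm: "q z \<noteq> m"
    proof
      assume "q z = m" then have "q z = q m" using assms(1) by simp
      then show False using False assms(3) by (simp add: inj_eq)
    qed
    have qS: "(q ^^ Suc k') x = q z" using k' by simp
    show ?thesis
    proof (cases "q z = a")
      case True
      then have "p z = m" using hp by simp
      have "\<exists>k'. (q ^^ k') x = a" using qS True by blast
      then show ?thesis using pS \<open>p z = m\<close> by simp
    next
      case False2: False
      then have "p z = q z" using qzm hp by simp
      then show ?thesis using pS qS qzm by metis
    qed
  qed
qed

lemma reach_iff:
  assumes "q m = m" "a \<noteq> m" "inj q" "x \<noteq> m" "y \<noteq> m"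
  shows "(\<exists>k. ((Transposition.transpose a m \<circ> q) ^^ k) x = y) \<longleftrightarrow> (\<exists>k. (q ^^ k) x = y)"
proof -
  have hp: "\<And>z. (Transposition.transpose a m \<circ> q) z = Transposition.transpose a m (q z)" by simp
  show ?thesis
    using reach_dir1[OF assms(1-4) hp] reach_dir2[OF assms(1-4) hp] assms(5) by metis
qed

lemma Dset_perm: "p \<in> Dset S N \<Longrightarrow> p permutes (S \<union> N)"
  by (simp add: Dset_def)

lemma finite_Dset: "finite S \<Longrightarrow> finite N \<Longrightarrow> finite (Dset S N)"
  by (rule finite_subset[of _ "{p. p permutes (S \<union> N)}"])
     (auto simp: Dset_def intro: finite_permutations)

lemma fwd:
  assumes mN: "m \<in> N" and disj: "S \<inter> N = {}" and aX: "a \<in> S \<union> (N - {m})"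
    and q: "q \<in> Dset S (N - {m}) \<union> Dset (S - {a}) (N - {m} - {a})"
  shows "Transposition.transpose a m \<circ> q \<in> Dset S N"
proof -
  have mS: "m \<notin> S" using mN disj by auto
  have am: "a \<noteq> m" using aX mS by auto
  have aXX: "a \<in> S \<union> N" using aX by auto
  have mX: "m \<in> S \<union> N" using mN by auto
  have qperm0: "q permutes (S \<union> (N - {m}))"
    using q
  proof
    assume "q \<in> Dset S (N - {m})" then show ?thesis by (simp add: Dset_def)
  next
    assume "q \<in> Dset (S - {a}) (N - {m} - {a})"
    then have "q permutes ((S - {a}) \<union> (N - {m} - {a}))" by (simp add: Dset_def)
    then show ?thesis by (rule permutes_subset) auto
  qed
  have qperm: "q permutes (S \<union> N)" using qperm0 by (rule permutes_subset) auto
  have qm: "q m = m" using qperm0 mS by (intro permutes_not_in[OF qperm0]) auto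
  have injq: "inj q" using qperm by (rule permutes_inj)
  have fixa: "\<forall>x\<in>S \<union> (N - {m}). q x = x \<longrightarrow> x = a"
  proof
    fix x assume x: "x \<in> S \<union> (N - {m})"
    show "q x = x \<longrightarrow> x = a"
      using q
    proof
      assume "q \<in> Dset S (N - {m})" then show ?thesis using x by (auto simp: Dset_def)
    next
      assume "q \<in> Dset (S - {a}) (N - {m} - {a})" then show ?thesis using x by (auto simp: Dset_def)
    qed
  qed
  define p where "p = Transposition.transpose a m \<circ> q"
  have perm: "p permutes (S \<union> N)"
    unfolding p_def by (rule permutes_compose[OF qperm permutes_swap_id[OF aXX mX]])
  have nofix: "\<forall>x\<in>S \<union> N. p x \<noteq> x"
  proof
    fix x assume x: "x \<in> S \<union> N"
    show "p x \<noteq> x"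
    proof (cases "x = m")
      case True then show ?thesis using qm am by (simp add: p_def)
    next
      case False
      have qxm: "q x \<noteq> m" using False qm injq by (metis injD)
      show ?thesis
      proof (cases "q x = a")
        case True then show ?thesis using False by (simp add: p_def)
      next
        case False2: False
        then have "p x = q x" using qxm by (simp add: p_def)
        moreover have "q x \<noteq> x" using fixa x False False2 by auto
        ultimately show ?thesis by simp
      qed
    qed
  qed
  have cyc: "\<forall>i\<in>S. \<forall>j\<in>S. i \<noteq> j \<longrightarrow> (\<forall>k::nat. (p ^^ k) i \<noteq> j)"
  proof (intro ballI impI allI notI)
    fix i j k assume i: "i \<in> S" and j: "j \<in> S" and ij: "i \<noteq> j" and pk: "(p ^^ k) i = j"
    have im: "i \<noteq> m" "j \<noteq> m" using i j mS by auto
    have "\<exists>k. (q ^^ k) i = j"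
      using reach_iff[OF qm am injq im] pk unfolding p_def by blast
    then obtain k' where k': "(q ^^ k') i = j" by blast
    show False using q
    proof
      assume "q \<in> Dset S (N - {m})" then show False using i j ij k' by (auto simp: Dset_def)
    next
      assume qd: "q \<in> Dset (S - {a}) (N - {m} - {a})"
      then have qa: "q a = a" by (auto simp: Dset_def intro: permutes_not_in)
      show False
      proof (cases "i = a")
        case True then show False using pow_fixed[of q a, OF qa] k' ij by auto
      next
        case False
        show False
        proof (cases "j = a")
          case True then show False using pow_to_fixed[of q a, OF qa injq] k' False by auto
        next
          case False2: False
          then show False using qd i j ij k' False by (auto simp: Dset_def)
        qed
      qed
    qed
  qed
  show ?thesis using perm nofix cyc unfolding Dset_def p_def[symmetric] by blast
qed


lemma bwd:
  assumes p: "p \<in> Dset S N" and mN: "m \<in> N" and disj: "S \<inter> N = {}"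
  shows "p m \<in> S \<union> (N - {m}) \<and>
    Transposition.transpose (p m) m \<circ> p \<in> Dset S (N - {m}) \<union> Dset (S - {p m}) (N - {m} - {p m})"
proof -
  define a where "a = p m"
  have mS: "m \<notin> S" using mN disj by auto
  have pperm: "p permutes (S \<union> N)" using p by (simp add: Dset_def)
  have mX: "m \<in> S \<union> N" using mN by auto
  have aXX: "a \<in> S \<union> N" unfolding a_def using permutes_in_image[OF pperm] mX by blast
  have am: "a \<noteq> m" unfolding a_def using p mX by (auto simp: Dset_def)
  have aX: "a \<in> S \<union> (N - {m})" using aXX am by auto
  define q where "q = Transposition.transpose a m \<circ> p"
  have pq: "p = Transposition.transpose a m \<circ> q"
    unfolding q_def by (simp add: comp_assoc[symmetric])
  have qperm: "q permutes (S \<union> N)"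
    unfolding q_def by (rule permutes_compose[OF pperm permutes_swap_id[OF aXX mX]])
  have qm: "q m = m" unfolding q_def a_def by simp
  have injq: "inj q" using qperm by (rule permutes_inj)
  have qperm': "q permutes (S \<union> (N - {m}))"
    by (rule permutes_superset[OF qperm]) (use qm in auto)
  have gen: "\<And>x. x \<in> S \<union> N \<Longrightarrow> x \<noteq> a \<Longrightarrow> x \<noteq> m \<Longrightarrow> q x \<noteq> x"
  proof -
    fix x assume x: "x \<in> S \<union> N" "x \<noteq> a" "x \<noteq> m"
    have px: "p x \<noteq> x" using p x by (auto simp: Dset_def)
    show "q x \<noteq> x"
    proof (cases "p x = a")
      case True then show ?thesis using x by (simp add: q_def)
    next
      case False
      show ?thesis
      proof (cases "p x = m")
        case True then show ?thesis using x by (simp add: q_def)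
      next
        case False2: False
        then show ?thesis using False px by (simp add: q_def)
      qed
    qed
  qed
  have cycq: "\<And>i j k. i \<in> S \<Longrightarrow> j \<in> S \<Longrightarrow> i \<noteq> j \<Longrightarrow> (q ^^ k) i \<noteq> j"
  proof
    fix i j k assume i: "i \<in> S" and j: "j \<in> S" and ij: "i \<noteq> j" and qk: "(q ^^ k) i = j"
    have im: "i \<noteq> m" "j \<noteq> m" using i j mS by auto
    have "\<exists>k. ((Transposition.transpose a m \<circ> q) ^^ k) i = j"
      using reach_iff[OF qm am injq im] qk by blast
    then show False using p i j ij unfolding pq[symmetric] by (auto simp: Dset_def)
  qed
  have "q \<in> Dset S (N - {m}) \<union> Dset (S - {a}) (N - {m} - {a})"
  proof (cases "q a = a")
    case True
    have eq: "S \<union> (N - {m}) - {a} = (S - {a}) \<union> (N - {m} - {a})" by auto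
    have "q permutes ((S - {a}) \<union> (N - {m} - {a}))"
      unfolding eq[symmetric] by (rule permutes_superset[OF qperm']) (use True in auto)
    moreover have "\<forall>x\<in>(S - {a}) \<union> (N - {m} - {a}). q x \<noteq> x"
    proof
      fix x assume "x \<in> (S - {a}) \<union> (N - {m} - {a})"
      then have "x \<in> S \<union> N" "x \<noteq> a" "x \<noteq> m" using mS by auto
      then show "q x \<noteq> x" by (rule gen)
    qed
    moreover have "\<forall>i\<in>S - {a}. \<forall>j\<in>S - {a}. i \<noteq> j \<longrightarrow> (\<forall>k::nat. (q ^^ k) i \<noteq> j)"
      using cycq by auto
    ultimately show ?thesis by (simp add: Dset_def)
  next
    case False
    have "\<forall>x\<in>S \<union> (N - {m}). q x \<noteq> x"
    proof
      fix x assume x: "x \<in> S \<union> (N - {m})"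
      show "q x \<noteq> x"
      proof (cases "x = a")
        case True then show ?thesis using False by simp
      next
        case False
        then have "x \<in> S \<union> N" "x \<noteq> a" "x \<noteq> m" using x mS by auto
        then show "q x \<noteq> x" by (rule gen)
      qed
    qed
    then show ?thesis using qperm' cycq by (simp add: Dset_def)
  qed
  then show ?thesis using aX unfolding a_def q_def by simp
qed


fun fD :: "nat \<Rightarrow> nat \<Rightarrow> nat" where
  "fD s 0 = (if s = 0 then 1 else 0)"
| "fD s (Suc n) = (s + n) * fD s n + s * fD (s - 1) n + n * fD s (n - 1)"

lemma Dset_split:
  assumes mN: "m \<in> N" and disj: "S \<inter> N = {}"
  shows "Dset S N = (\<Union>a\<in>S \<union> (N - {m}).
     (\<lambda>q. Transposition.transpose a m \<circ> q) ` (Dset S (N - {m}) \<union> Dset (S - {a}) (N - {m} - {a})))" (is "_ = ?R")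
proof
  show "Dset S N \<subseteq> ?R"
  proof
    fix p assume p: "p \<in> Dset S N"
    note b = bwd[OF p mN disj]
    have "p = Transposition.transpose (p m) m \<circ> (Transposition.transpose (p m) m \<circ> p)"
      by (simp add: comp_assoc[symmetric])
    then show "p \<in> ?R" using b by blast
  qed
next
  show "?R \<subseteq> Dset S N" using fwd[OF mN disj] by blast
qed

lemma Dset_empty_N: "Dset S {} = (if S = {} then {id} else {})"
proof (cases "S = {}")
  case True
  have "p \<in> Dset {} {} \<longleftrightarrow> p = id" for p
    unfolding Dset_def mem_Collect_eq Un_absorb permutes_empty ball_empty by simp
  then have "Dset {} {} = {id}" by blast
  then show ?thesis using True by simp
next
  case False
  then obtain s where s: "s \<in> S" by blast
  have "p \<notin> Dset S {}" for p
  proof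
    assume p: "p \<in> Dset S {}"
    have "p permutes S" using p by (simp add: Dset_def)
    then have ps: "p s \<in> S" using s by (rule permutes_in_image[THEN iffD2])
    have nf: "\<forall>x\<in>S \<union> {}. p x \<noteq> x" using p unfolding Dset_def by blast
    then have pss: "p s \<noteq> s" using s by blast
    have cyc: "\<forall>i\<in>S. \<forall>j\<in>S. i \<noteq> j \<longrightarrow> (\<forall>k::nat. (p ^^ k) i \<noteq> j)"
      using p unfolding Dset_def by blast
    have "(p ^^ 1) s \<noteq> p s" using cyc[rule_format, OF s ps] pss by metis
    then show False by simp
  qed
  then show ?thesis using False by auto
qed

lemma img_m:
  assumes "q \<in> Dset S (N - {m}) \<union> Dset (S - {a}) (N - {m} - {a})" "m \<notin> S"
  shows "(Transposition.transpose a m \<circ> q) m = a"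
proof -
  have "q permutes (S \<union> (N - {m})) \<or> q permutes ((S - {a}) \<union> (N - {m} - {a}))"
    using assms(1) by (auto simp: Dset_def)
  then have "q m = m"
  proof
    assume "q permutes (S \<union> (N - {m}))" then show ?thesis by (rule permutes_not_in) (use assms(2) in auto)
  next
    assume "q permutes ((S - {a}) \<union> (N - {m} - {a}))" then show ?thesis by (rule permutes_not_in) (use assms(2) in auto)
  qed
  then show ?thesis by simp
qed

lemma card_Dset:
  assumes "finite S" "finite N" "S \<inter> N = {}"
  shows "card (Dset S N) = fD (card S) (card N)"
  using assms
proof (induction "card N" arbitrary: S N rule: less_induct)
  case less
  show ?case
  proof (cases "N = {}")
    case True then show ?thesis using less.prems by (simp add: Dset_empty_N card_gt_0_iff)
  next
    case False
    then obtain m where mN: "m \<in> N" by blast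
    have mS: "m \<notin> S" using mN less.prems by auto
    define N' where "N' = N - {m}"
    obtain n0 where n0: "card N = Suc n0" using mN less.prems by (metis card_Suc_Diff1)
    have cN': "card N' = n0" unfolding N'_def using n0 mN less.prems by simp
    define img where "img a = (\<lambda>q. Transposition.transpose a m \<circ> q) ` (Dset S N' \<union> Dset (S - {a}) (N' - {a}))" for a
    have split: "Dset S N = (\<Union>a\<in>S \<union> N'. img a)"
      unfolding img_def N'_def by (rule Dset_split[OF mN less.prems(3)])
    have fin: "finite (S \<union> N')" using less.prems unfolding N'_def by auto
    have finimg: "\<forall>a\<in>S \<union> N'. finite (img a)"
    proof
      fix a :: nat assume "a \<in> S \<union> N'"
      have "finite (Dset S N')" "finite (Dset (S - {a}) (N' - {a}))"
        using less.prems unfolding N'_def by (auto intro!: finite_Dset)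
      then show "finite (img a)" unfolding img_def by simp
    qed
    have disjimg: "\<forall>a\<in>S \<union> N'. \<forall>b\<in>S \<union> N'. a \<noteq> b \<longrightarrow> img a \<inter> img b = {}"
    proof (intro ballI impI)
      fix a b :: nat assume "a \<noteq> b"
      have "p m = a" if "p \<in> img a" for p
        using that img_m[OF _ mS, of _ N a] unfolding img_def N'_def by blast
      moreover have "p m = b" if "p \<in> img b" for p
        using that img_m[OF _ mS, of _ N b] unfolding img_def N'_def by blast
      ultimately show "img a \<inter> img b = {}" using \<open>a \<noteq> b\<close> by blast
    qed
    have cimg: "card (img a) = card (Dset S N') + card (Dset (S - {a}) (N' - {a}))"
      if a: "a \<in> S \<union> N'" for a
    proof -
      have inj: "inj_on (\<lambda>q. Transposition.transpose a m \<circ> q) X" for X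
        by (rule inj_onI) (metis comp_assoc transpose_comp_involutory comp_id id_comp)
      have d: "Dset S N' \<inter> Dset (S - {a}) (N' - {a}) = {}"
      proof -
        have "q a \<noteq> a" if "q \<in> Dset S N'" for q using that a by (auto simp: Dset_def)
        moreover have "q a = a" if "q \<in> Dset (S - {a}) (N' - {a})" for q
          using that by (auto simp: Dset_def intro: permutes_not_in)
        ultimately show ?thesis by blast
      qed
      have "card (img a) = card (Dset S N' \<union> Dset (S - {a}) (N' - {a}))"
        unfolding img_def by (rule card_image[OF inj])
      also have "\<dots> = card (Dset S N') + card (Dset (S - {a}) (N' - {a}))"
        by (rule card_Un_disjoint) (use less.prems d in \<open>auto simp: N'_def intro: finite_Dset\<close>)
      finally show ?thesis .
    qed
    have IH1: "card (Dset S N') = fD (card S) n0"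
      using less.hyps[of N' S] less.prems cN' n0 unfolding N'_def by auto
    have IHS: "card (Dset (S - {a}) (N' - {a})) = fD (card S - 1) n0" if "a \<in> S" for a
    proof -
      have "N' - {a} = N'" using that less.prems unfolding N'_def by auto
      then show ?thesis using less.hyps[of N' "S - {a}"] less.prems cN' n0 that unfolding N'_def
        by auto
    qed
    have IHN: "card (Dset (S - {a}) (N' - {a})) = fD (card S) (n0 - 1)" if "a \<in> N'" for a
    proof -
      have "S - {a} = S" using that less.prems unfolding N'_def by auto
      moreover have "card (N' - {a}) = n0 - 1" using that cN' by simp
      moreover have "card (N' - {a}) < card N" using that n0 cN' by simp
      ultimately show ?thesis using less.hyps[of "N' - {a}" S] less.prems unfolding N'_def
        by auto
    qed
    have "card (Dset S N) = (\<Sum>a\<in>S \<union> N'. card (img a))"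
      unfolding split by (rule card_UN_disjoint[OF fin finimg disjimg])
    also have "\<dots> = (\<Sum>a\<in>S. card (img a)) + (\<Sum>a\<in>N'. card (img a))"
      by (rule sum.union_disjoint) (use less.prems in \<open>auto simp: N'_def\<close>)
    also have "(\<Sum>a\<in>S. card (img a)) = (\<Sum>a\<in>S. fD (card S) n0 + fD (card S - 1) n0)"
      by (rule sum.cong) (auto simp: cimg IH1 IHS)
    also have "(\<Sum>a\<in>N'. card (img a)) = (\<Sum>a\<in>N'. fD (card S) n0 + fD (card S) (n0 - 1))"
      by (rule sum.cong) (auto simp: cimg IH1 IHN)
    also have "(\<Sum>a\<in>S. fD (card S) n0 + fD (card S - 1) n0) + (\<Sum>a\<in>N'. fD (card S) n0 + fD (card S) (n0 - 1))
       = fD (card S) (card N)"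
      using cN' n0 by (simp add: algebra_simps)
    finally show ?thesis .
  qed
qed


lemma PL: "(\<Sum>k\<le>Suc m. (Suc m choose k) * g k) =
    (\<Sum>k\<le>m. (m choose k) * g k) + (\<Sum>k\<le>m. (m choose k) * (g (Suc k) :: nat))"
proof -
  have "(\<Sum>k\<le>Suc m. (Suc m choose k) * g k) = g 0 + (\<Sum>k\<le>m. (Suc m choose Suc k) * g (Suc k))"
    by (subst sum.atMost_Suc_shift) simp
  also have "\<dots> = g 0 + (\<Sum>k\<le>m. (m choose Suc k) * g (Suc k)) + (\<Sum>k\<le>m. (m choose k) * g (Suc k))"
    by (simp add: sum.distrib algebra_simps)
  also have "g 0 + (\<Sum>k\<le>m. (m choose Suc k) * g (Suc k)) = (\<Sum>k\<le>Suc m. (m choose k) * g k)"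
    by (subst sum.atMost_Suc_shift) simp
  also have "\<dots> = (\<Sum>k\<le>m. (m choose k) * g k)" by simp
  finally show ?thesis .
qed

lemma AL: "(\<Sum>j\<le>Suc m. (Suc m choose j) * (j * g j)) = Suc m * (\<Sum>j\<le>m. (m choose j) * (g (Suc j) :: nat))"
proof -
  have "(\<Sum>j\<le>Suc m. (Suc m choose j) * (j * g j)) = (\<Sum>j\<le>m. (Suc m choose Suc j) * (Suc j * g (Suc j)))"
    by (subst sum.atMost_Suc_shift) simp
  also have "\<dots> = (\<Sum>j\<le>m. Suc m * ((m choose j) * g (Suc j)))"
  proof (rule sum.cong)
    fix j
    have "Suc j * (Suc m choose Suc j) = Suc m * (m choose j)" by (rule Suc_times_binomial)
    then show "(Suc m choose Suc j) * (Suc j * g (Suc j)) = Suc m * ((m choose j) * g (Suc j))"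
      by (metis mult.assoc mult.commute)
  qed simp
  also have "\<dots> = Suc m * (\<Sum>j\<le>m. (m choose j) * g (Suc j))" by (simp add: sum_distrib_left)
  finally show ?thesis .
qed

definition hD :: "nat \<Rightarrow> nat \<Rightarrow> nat" where
  "hD s m = (\<Sum>k\<le>m. (m choose k) * fD s k)"

definition h1D :: "nat \<Rightarrow> nat \<Rightarrow> nat" where
  "h1D s m = (\<Sum>k\<le>m. (m choose k) * fD s (Suc k))"

lemma hD_Suc: "hD s (Suc m) = hD s m + h1D s m"
  unfolding hD_def h1D_def by (rule PL)

lemma h1D_eq: "h1D s m = (s + m) * hD s m + s * hD (s - 1) m"
proof (cases m)
  case 0 then show ?thesis by (simp add: hD_def h1D_def)
next
  case (Suc m')
  have "h1D s m = (\<Sum>k\<le>m. (m choose k) * (s * fD s k) + (m choose k) * (k * fD s k)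
        + (m choose k) * (s * fD (s - 1) k) + (m choose k) * (k * fD s (k - 1)))"
    unfolding h1D_def by (rule sum.cong) (auto simp: algebra_simps)
  also have "\<dots> = s * hD s m + (\<Sum>k\<le>m. (m choose k) * (k * fD s k)) + s * hD (s - 1) m
        + (\<Sum>k\<le>m. (m choose k) * (k * fD s (k - 1)))"
    by (simp add: sum.distrib hD_def sum_distrib_left algebra_simps)
  also have "(\<Sum>k\<le>m. (m choose k) * (k * fD s k)) = m * h1D s m'"
    unfolding Suc h1D_def by (rule AL)
  also have "(\<Sum>k\<le>m. (m choose k) * (k * fD s (k - 1))) = m * hD s m'"
    unfolding Suc hD_def using AL[of m' "\<lambda>k. fD s (k - 1)"] by simp
  also have "s * hD s m + m * h1D s m' + s * hD (s - 1) m + m * hD s m' = (s + m) * hD s m + s * hD (s - 1) m"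
    using hD_Suc[of s m'] unfolding Suc by (simp add: algebra_simps)
  finally show ?thesis .
qed

lemma hD_rec: "hD s (Suc m) = (s + m + 1) * hD s m + s * hD (s - 1) m"
  using hD_Suc[of s m] h1D_eq[of s m] by simp

lemma G_rec: "fact (Suc m) * (Suc m choose s) = (s + m + 1) * (fact m * (m choose s)) + s * (fact m * (m choose (s - 1)) :: nat)"
proof (cases s)
  case 0 then show ?thesis by simp
next
  case (Suc t)
  have key: "(m - t) * (m choose t) = Suc t * (m choose Suc t)"
  proof (cases m)
    case 0 then show ?thesis by simp
  next
    case (Suc m')
    have "(m - t) * (m choose t) = m * (m' choose t)" using binomial_absorb_comp[of m t] Suc by simp
    also have "\<dots> = Suc t * (m choose Suc t)" using Suc_times_binomial[of t m'] Suc by simp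
    finally show ?thesis .
  qed
  have k2: "Suc m * (m choose t) = Suc t * (m choose Suc t) + Suc t * (m choose t)"
  proof (cases "t \<le> m")
    case True
    then have "Suc m = (m - t) + Suc t" by simp
    then have "Suc m * (m choose t) = (m - t) * (m choose t) + Suc t * (m choose t)"
      by (metis add_mult_distrib)
    then show ?thesis using key by simp
  next
    case False then show ?thesis by (simp add: binomial_eq_0)
  qed
  have "fact (Suc m) * (Suc m choose s) = fact m * (Suc m * (m choose Suc t) + Suc m * (m choose t))"
    unfolding Suc fact_Suc binomial_Suc_Suc by (simp only: add_mult_distrib2 mult_ac of_nat_id)
  also have "\<dots> = fact m * (Suc m * (m choose Suc t) + Suc t * (m choose Suc t) + Suc t * (m choose t))"
    using k2 by simp
  also have "\<dots> = (s + m + 1) * (fact m * (m choose s)) + s * (fact m * (m choose (s - 1)))"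
    unfolding Suc by (simp add: algebra_simps)
  finally show ?thesis .
qed


lemma hD_closed: "hD s n = fact n * (n choose s)"
proof (induction n arbitrary: s)
  case 0 then show ?case by (simp add: hD_def)
next
  case (Suc n)
  show ?case using hD_rec[of s n] G_rec[of n s] Suc by simp
qed

lemma D_eq: "D r k = fD r k"
proof -
  have "r_derangements r k = Dset {1..r} {r+1..k+r}"
  proof -
    have "{1..r} \<union> {r+1..k+r} = {1..k+r}" by auto
    then show ?thesis unfolding r_derangements_def Dset_def by simp
  qed
  moreover have "card (Dset {1..r} {r+1..k+r}) = fD r k"
    using card_Dset[of "{1..r}" "{r+1..k+r}"] by auto
  ultimately show ?thesis unfolding D_def by simp
qed

theorem mainTheorem1:
  fixes r n :: nat
  assumes "n \<ge> r"
  shows "(\<Sum>k=0..n. (n choose k) * D r k) = fact n * (n choose r)"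
proof -
  have "(\<Sum>k=0..n. (n choose k) * D r k) = hD r n"
    unfolding hD_def D_eq atMost_atLeast0 by simp
  then show ?thesis using hD_closed by simp
qed

end
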